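(* Let $\mathbf{r}=(r_1,\dots,r_n)$ be a vector of positive integers. Then $$\sum_{\sigma\in\mathfrak{S}^{\mathbf{r}}_n}q^{\mathrm{maj}(\sigma)}=[n]!\cdot\prod_{i=1}^n\big(1+(r_i-1)\,q\big).$$
   Context: For $1\le i\le n$ let $S_i=\{-1\}\cup\{2,3,\dots,r_i\}$ (a set of size $r_i$). An $\mathbf{r}$-signed permutation is a list $\sigma=(\sigma_1,\dots,\sigma_{n+1})=((j_1,\pi_1),(j_2,\pi_2),\dots,(j_n,\pi_n),0)$ where $\pi_1\cdots\pi_n$ is a permutation of $\{1,\dots,n\}$ and $j_k\in S_{\pi_k}$ for each $k$; $\mathfrak{S}^{\mathbf{r}}_n$ denotes the set of these. The entries lie in $\Lambda=\{(j,i):1\le i\le n,\ j\in S_i\}\cup\{0\}$, linearly ordered as follows: pairs are compared lexicographically (first by $j$, then by $i$), and $0<(j,i)$ if and only if $j>0$. The descent set is $\mathrm{Des}(\sigma)=\{k\in\{1,\dots,n\}:\sigma_k>\sigma_{k+1}\}$ and $\mathrm{maj}(\sigma)=\sum_{k\in\mathrm{Des}(\sigma)}k$. $[m]=1+q+\cdots+q^{m-1}$ and $[n]!=[n][n-1]\cdots[1]$. *)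

theory Defs
  imports Main "HOL-Combinatorics.Multiset_Permutations"
begin

text \<open>Entries of Lambda: None encodes the entry 0, Some (j,i) encodes the pair (j,i).\<close>
type_synonym entry = "(int \<times> nat) option"

definition Sset :: "(nat \<Rightarrow> nat) \<Rightarrow> nat \<Rightarrow> int set" where
  "Sset r i = {-1} \<union> {2..int (r i)}"

definition lam_less :: "entry \<Rightarrow> entry \<Rightarrow> bool" where
  "lam_less x y = (case (x, y) of
      (None, None) \<Rightarrow> False
    | (None, Some (j, i)) \<Rightarrow> j > 0
    | (Some (j, i), None) \<Rightarrow> \<not> (j > 0)
    | (Some (j1, i1), Some (j2, i2)) \<Rightarrow> j1 < j2 \<or> (j1 = j2 \<and> i1 < i2))"

text \<open>r-signed permutations as lists of length n+1 (sigma_k = sigma ! (k-1)).\<close>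
definition signed_perms :: "(nat \<Rightarrow> nat) \<Rightarrow> nat \<Rightarrow> entry list set" where
  "signed_perms r n = {map Some (zip js p) @ [None] | js p.
       p \<in> permutations_of_set {1..n} \<and> length js = n \<and>
       (\<forall>k<n. js ! k \<in> Sset r (p ! k))}"

definition Des :: "entry list \<Rightarrow> nat set" where
  "Des \<sigma> = {k \<in> {1..length \<sigma> - 1}. lam_less (\<sigma> ! k) (\<sigma> ! (k - 1))}"

definition maj :: "entry list \<Rightarrow> nat" where
  "maj \<sigma> = \<Sum> (Des \<sigma>)"

definition qint :: "'a::comm_ring_1 \<Rightarrow> nat \<Rightarrow> 'a" where
  "qint q m = (\<Sum>k<m. q ^ k)"

definition qfact :: "'a::comm_ring_1 \<Rightarrow> nat \<Rightarrow> 'a" where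
  "qfact q n = (\<Prod>m=1..n. qint q m)"

end

theory Submission imports Defs "HOL-Library.Product_Lexorder" "HOL-Library.FuncSet" begin

definition majG :: "'b::linorder list \<Rightarrow> nat" where
  "majG xs = \<Sum>{k\<in>{1..length xs - 1}. xs!k < xs!(k-1)}"

lemma majG_snoc:
  fixes ys :: "'b::linorder list"
  shows "majG (ys @ [b]) = majG ys + (if ys \<noteq> [] \<and> b < last ys then length ys else 0)"
proof -
  let ?D = "\<lambda>xs::'b list. {k\<in>{1..length xs - 1}. xs!k < xs!(k-1)}"
  have eq: "?D (ys@[b]) = ?D ys \<union> (if ys \<noteq> [] \<and> b < last ys then {length ys} else {})"
  proof (cases "ys = []")
    case True then show ?thesis by auto
  next
    case False
    have mem: "k \<in> ?D (ys@[b]) \<longleftrightarrow> k \<in> ?D ys \<union> (if b < last ys then {length ys} else {})" for k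
    proof -
      consider "k < length ys" | "k = length ys" | "k > length ys" by linarith
      then show ?thesis
      proof cases
        case 1
        have e1: "(ys@[b])!k = ys!k" "(ys@[b])!(k-1) = ys!(k-1)" using 1 less_imp_diff_less[OF 1, of 1] by (simp_all add: nth_append)
        have "k \<le> length ys - 1 \<longleftrightarrow> k \<le> length (ys@[b]) - 1" using 1 by simp
        then show ?thesis using 1 by (simp only: e1 mem_Collect_eq atLeastAtMost_iff Un_iff) simp
      next
        case 2
        have "\<not> k \<le> length ys - 1" using 2 False by (cases ys) auto
        then have "k \<notin> ?D ys" by simp
        moreover have "k - 1 < length ys" "k \<ge> 1" using 2 False by (auto simp: Suc_le_eq)
        ultimately show ?thesis using 2 False by (simp add: nth_append last_conv_nth)
      next
        case 3
        have "\<not> k \<le> length ys - 1" using 3 by arith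
        then show ?thesis using 3 by simp
      qed
    qed
    have "?D (ys@[b]) = ?D ys \<union> (if b < last ys then {length ys} else {})"
      by (rule set_eqI) (rule mem)
    then show ?thesis using False by simp
  qed
  have fin: "finite (?D ys)" by simp
  have "length ys \<notin> ?D ys" by auto
  then show ?thesis unfolding majG_def eq using fin by auto
qed

lemma qint_add: "qint q (a + b) = qint q a + q ^ a * qint q b"
  by (induction b) (auto simp: qint_def algebra_simps power_add)

lemma qint_Suc: "qint q (Suc n) = 1 + q * qint q n"
  using qint_add[of q 1 n] by (simp add: qint_def)

lemma count_sum:
  fixes f :: "'a \<Rightarrow> 'b::linorder" and q :: "'c::comm_ring_1"
  shows "finite B \<Longrightarrow> inj_on f B \<Longrightarrow> (\<Sum>m\<in>B. q ^ card {a\<in>B. f a > f m}) = qint q (card B)"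
proof (induction "card B" arbitrary: B)
  case 0 then show ?case by (simp add: qint_def)
next
  case (Suc k)
  then have ne: "B \<noteq> {}" by auto
  obtain M where M: "M \<in> B" "\<forall>b\<in>B. f b \<le> f M"
  proof -
    have fin: "finite (f ` B)" "f ` B \<noteq> {}" using Suc.prems ne by auto
    then have "Max (f ` B) \<in> f ` B" by (rule Max_in)
    then obtain M where "M \<in> B" "f M = Max (f ` B)" by auto
    moreover have "\<forall>b\<in>B. f b \<le> Max (f ` B)" using fin by simp
    ultimately show ?thesis using that by auto
  qed
  let ?B = "B - {M}"
  have cB: "card ?B = k" using Suc M by simp
  have "(\<Sum>m\<in>B. q ^ card {a\<in>B. f a > f m}) = q ^ card {a\<in>B. f a > f M} + (\<Sum>m\<in>?B. q ^ card {a\<in>B. f a > f m})"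
    using Suc.prems M by (simp add: sum.remove)
  also have "card {a\<in>B. f a > f M} = 0"
  proof -
    have "{a\<in>B. f a > f M} = {}" using M by (auto simp: not_less[symmetric])
    then show ?thesis by (metis card.empty)
  qed
  also have "(\<Sum>m\<in>?B. q ^ card {a\<in>B. f a > f m}) = (\<Sum>m\<in>?B. q * q ^ card {a\<in>?B. f a > f m})"
  proof (rule sum.cong)
    fix m assume m: "m \<in> ?B"
    have fm: "f m < f M" using M m Suc.prems(2) by (metis DiffE inj_on_def le_less singletonI)
    have "{a\<in>B. f a > f m} = insert M {a\<in>?B. f a > f m}" using M fm by auto
    then have "card {a\<in>B. f a > f m} = Suc (card {a\<in>?B. f a > f m})" using Suc.prems by simp
    then show "q ^ card {a\<in>B. f a > f m} = q * q ^ card {a\<in>?B. f a > f m}" by simp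
  qed simp
  also have "\<dots> = q * qint q k"
    using Suc.hyps(1)[of ?B] cB Suc.prems by (simp add: sum_distrib_left[symmetric] inj_on_diff)
  finally show ?case by (simp add: Suc.hyps(2)[symmetric] qint_Suc)
qed

lemma count_sum2:
  fixes f :: "'a \<Rightarrow> 'b::linorder" and q :: "'c::comm_ring_1"
  assumes fin: "finite A" and inj: "inj_on f A" and nz: "\<forall>a\<in>A. f a \<noteq> z"
  shows "(\<Sum>x\<in>A. q ^ (card {a\<in>A. f a > f x} + (if z < f x then card A else 0)))
         = q ^ card {a\<in>A. f a > z} * qint q (card A)"
proof -
  define A1 where "A1 = {a\<in>A. z < f a}"
  define A2 where "A2 = {a\<in>A. f a < z}"
  have U: "A = A1 \<union> A2" using nz unfolding A1_def A2_def by (auto simp: neq_iff)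
  have D: "A1 \<inter> A2 = {}" unfolding A1_def A2_def by auto
  have f1: "finite A1" "finite A2" using fin unfolding A1_def A2_def by auto
  have cA: "card A = card A1 + card A2" using U D f1 by (simp add: card_Un_disjoint)
  have g: "{a\<in>A. f a > z} = A1" unfolding A1_def by auto
  have s1: "(\<Sum>x\<in>A1. q ^ (card {a\<in>A. f a > f x} + (if z < f x then card A else 0)))
      = (\<Sum>x\<in>A1. q ^ card A * q ^ card {a\<in>A1. f a > f x})"
  proof (rule sum.cong)
    fix x assume x: "x \<in> A1"
    have "{a\<in>A. f a > f x} = {a\<in>A1. f a > f x}" using x unfolding A1_def by auto
    then show "q ^ (card {a\<in>A. f a > f x} + (if z < f x then card A else 0)) = q ^ card A * q ^ card {a\<in>A1. f a > f x}"
      using x unfolding A1_def by (simp add: power_add mult.commute)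
  qed simp
  have s2: "(\<Sum>x\<in>A2. q ^ (card {a\<in>A. f a > f x} + (if z < f x then card A else 0)))
      = (\<Sum>x\<in>A2. q ^ card A1 * q ^ card {a\<in>A2. f a > f x})"
  proof (rule sum.cong)
    fix x assume x: "x \<in> A2"
    have "{a\<in>A. f a > f x} = A1 \<union> {a\<in>A2. f a > f x}" using x U unfolding A1_def A2_def by auto
    moreover have "A1 \<inter> {a\<in>A2. f a > f x} = {}" using D by auto
    ultimately have "card {a\<in>A. f a > f x} = card A1 + card {a\<in>A2. f a > f x}"
      using f1 by (simp add: card_Un_disjoint)
    moreover have "\<not> z < f x" using x unfolding A2_def by auto
    ultimately show "q ^ (card {a\<in>A. f a > f x} + (if z < f x then card A else 0)) = q ^ card A1 * q ^ card {a\<in>A2. f a > f x}"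
      by (simp add: power_add)
  qed simp
  have i1: "inj_on f A1" "inj_on f A2" using inj U by (auto intro: inj_on_subset)
  have "(\<Sum>x\<in>A. q ^ (card {a\<in>A. f a > f x} + (if z < f x then card A else 0)))
       = q ^ card A * qint q (card A1) + q ^ card A1 * qint q (card A2)"
    using U D f1 s1 s2 count_sum[OF f1(1) i1(1), of q] count_sum[OF f1(2) i1(2), of q]
    by (simp add: sum.union_disjoint sum_distrib_left[symmetric])
  also have "\<dots> = q ^ card A1 * qint q (card A2 + card A1)"
    unfolding qint_add cA power_add by (simp add: algebra_simps)
  finally show ?thesis using g cA by (simp add: add.commute)
qed

lemma sum_rev_perm:
  "(\<Sum>p\<in>permutations_of_set A. h p) = (\<Sum>p\<in>permutations_of_set A. h (rev p))"
proof -
  have "(\<Sum>p\<in>permutations_of_set A. h (rev p)) = (\<Sum>p\<in>rev ` permutations_of_set A. h p)"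
    by (subst sum.reindex) (auto simp: inj_on_def)
  then show ?thesis by simp
qed

lemma qfact_Suc: "qfact q (Suc k) = qfact q k * qint q (Suc k)"
  by (simp add: qfact_def)

lemma perm_maj:
  fixes f :: "'a \<Rightarrow> 'b::linorder" and q :: "'c::comm_ring_1"
  shows "finite A \<Longrightarrow> inj_on f A \<Longrightarrow> \<forall>a\<in>A. f a \<noteq> z \<Longrightarrow>
    (\<Sum>p\<in>permutations_of_set A. q ^ majG (map f p @ [z])) = q ^ card {a\<in>A. f a > z} * qfact q (card A)"
proof (induction "card A" arbitrary: A z)
  case 0
  then have "A = {}" by auto
  then show ?case by (simp add: majG_def qfact_def)
next
  case (Suc k)
  have ne: "A \<noteq> {}" using Suc.hyps(2) by auto
  let ?h = "\<lambda>p. q ^ majG (map f p @ [z])"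
  have inner: "(\<Sum>u\<in>permutations_of_set (A - {x}). ?h (rev (x # u)))
       = q ^ card {a\<in>A. f a > f x} * qfact q k * q ^ (if z < f x then card A else 0)" if x: "x \<in> A" for x
  proof -
    have "?h (rev (x # u)) = q ^ majG (map f (rev u) @ [f x]) * q ^ (if z < f x then card A else 0)"
      if u: "u \<in> permutations_of_set (A - {x})" for u
    proof -
      have lu: "length u = k" using length_finite_permutations_of_set[OF u] Suc x by simp
      have "map f (rev (x # u)) @ [z] = (map f (rev u) @ [f x]) @ [z]" by simp
      then have "majG (map f (rev (x # u)) @ [z]) = majG (map f (rev u) @ [f x]) + (if z < f x then Suc k else 0)"
        using majG_snoc[of "map f (rev u) @ [f x]" z] lu by simp
      then show ?thesis using Suc.hyps(2) by (simp add: power_add)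
    qed
    then have "(\<Sum>u\<in>permutations_of_set (A - {x}). ?h (rev (x # u)))
       = (\<Sum>u\<in>permutations_of_set (A - {x}). q ^ majG (map f (rev u) @ [f x])) * q ^ (if z < f x then card A else 0)"
      by (simp add: sum_distrib_right)
    also have "(\<Sum>u\<in>permutations_of_set (A - {x}). q ^ majG (map f (rev u) @ [f x]))
       = (\<Sum>u\<in>permutations_of_set (A - {x}). q ^ majG (map f u @ [f x]))"
      by (rule sum_rev_perm[symmetric])
    also have "\<dots> = q ^ card {a\<in>A - {x}. f a > f x} * qfact q (card (A - {x}))"
      using Suc.prems x by (intro Suc.hyps(1)) (auto simp: Suc.hyps(2)[symmetric] inj_on_def)
    also have "{a\<in>A - {x}. f a > f x} = {a\<in>A. f a > f x}" by auto
    also have "card (A - {x}) = k" using Suc.hyps(2) Suc.prems x by simp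
    finally show ?thesis .
  qed
  have "(\<Sum>p\<in>permutations_of_set A. ?h p) = (\<Sum>p\<in>permutations_of_set A. ?h (rev p))"
    by (rule sum_rev_perm)
  also have "\<dots> = (\<Sum>x\<in>A. \<Sum>p\<in>(\<lambda>xs. x # xs) ` permutations_of_set (A - {x}). ?h (rev p))"
    unfolding permutations_of_set_nonempty[OF ne]
    by (rule sum.UNION_disjoint) (use Suc.prems in auto)
  also have "\<dots> = (\<Sum>x\<in>A. \<Sum>u\<in>permutations_of_set (A - {x}). ?h (rev (x # u)))"
  proof (rule sum.cong[OF refl])
    fix x
    show "(\<Sum>p\<in>(\<lambda>xs. x # xs) ` permutations_of_set (A - {x}). ?h (rev p)) = (\<Sum>u\<in>permutations_of_set (A - {x}). ?h (rev (x # u)))"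
      by (subst sum.reindex) (auto simp: inj_on_def)
  qed
  also have "\<dots> = (\<Sum>x\<in>A. qfact q k * q ^ (card {a\<in>A. f a > f x} + (if z < f x then card A else 0)))"
  proof (rule sum.cong[OF refl])
    fix x assume x: "x \<in> A"
    show "(\<Sum>u\<in>permutations_of_set (A - {x}). ?h (rev (x # u))) = qfact q k * q ^ (card {a\<in>A. f a > f x} + (if z < f x then card A else 0))"
      unfolding inner[OF x] by (simp add: power_add mult_ac)
  qed
  also have "\<dots> = qfact q k * (q ^ card {a\<in>A. f a > z} * qint q (card A))"
    unfolding sum_distrib_left[symmetric] count_sum2[OF Suc.prems, of q] ..
  finally show ?case by (simp add: Suc.hyps(2)[symmetric] qfact_Suc mult_ac)
qed

definition key :: "entry \<Rightarrow> int \<times> nat" where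
  "key x = (case x of None \<Rightarrow> (0, 0) | Some p \<Rightarrow> p)"

definition okE :: "entry \<Rightarrow> bool" where
  "okE x = (case x of None \<Rightarrow> True | Some (j, i) \<Rightarrow> j \<noteq> 0)"

lemma lam_key: "okE x \<Longrightarrow> okE y \<Longrightarrow> lam_less x y = (key x < key y)"
  by (cases x; cases y) (auto simp: lam_less_def key_def okE_def less_prod_def)

lemma maj_key:
  assumes "\<forall>x\<in>set \<sigma>. okE x"
  shows "maj \<sigma> = majG (map key \<sigma>)"
proof -
  have "Des \<sigma> = {k\<in>{1..length (map key \<sigma>) - 1}. map key \<sigma> ! k < map key \<sigma> ! (k - 1)}"
  proof (rule set_eqI)
    fix k
    show "k \<in> Des \<sigma> \<longleftrightarrow> k \<in> {k\<in>{1..length (map key \<sigma>) - 1}. map key \<sigma> ! k < map key \<sigma> ! (k - 1)}"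
    proof (cases "1 \<le> k \<and> k \<le> length \<sigma> - 1")
      case True
      then have k: "k < length \<sigma>" "k - 1 < length \<sigma>" by arith+
      then have "okE (\<sigma> ! k)" "okE (\<sigma> ! (k - 1))" using assms by auto
      then show ?thesis using k True by (simp add: Des_def lam_key)
    next
      case False
      then show ?thesis by (simp add: Des_def) blast
    qed
  qed
  then show ?thesis by (simp add: maj_def majG_def)
qed

definition W :: "(nat \<Rightarrow> int) \<Rightarrow> nat list \<Rightarrow> entry list" where
  "W c p = map (\<lambda>i. Some (c i, i)) p @ [None]"

lemma signed_eq:
  "signed_perms r n = (\<lambda>(c, p). W c p) ` (PiE {1..n} (Sset r) \<times> permutations_of_set {1..n})"
proof (rule set_eqI, rule iffI)
  fix \<sigma> assume "\<sigma> \<in> signed_perms r n"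
  then obtain js p where sig: "\<sigma> = map Some (zip js p) @ [None]"
    and p: "p \<in> permutations_of_set {1..n}" and ljs: "length js = n"
    and js: "\<forall>k<n. js ! k \<in> Sset r (p ! k)"
    unfolding signed_perms_def by blast
  have lp: "length p = n" using length_finite_permutations_of_set[OF p] by simp
  have dp: "distinct p" and sp: "set p = {1..n}" using p by (auto simp: permutations_of_set_def)
  define c where "c = (\<lambda>i. if i \<in> {1..n} then the (map_of (zip p js) i) else undefined)"
  have ck: "c (p ! k) = js ! k" if "k < n" for k
  proof -
    have "p ! k \<in> set p" using lp that by simp
    then have "p ! k \<in> {1..n}" using sp by simp
    then show ?thesis unfolding c_def using map_of_zip_nth[of p js k] lp ljs dp that by simp
  qed
  have "map Some (zip js p) = map (\<lambda>i. Some (c i, i)) p"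
    by (rule nth_equalityI) (auto simp: lp ljs ck)
  then have "\<sigma> = W c p" by (simp add: sig W_def)
  moreover have "c \<in> PiE {1..n} (Sset r)"
  proof
    fix i assume i: "i \<in> {1..n}"
    then obtain k where k: "k < n" "p ! k = i" using sp lp by (metis in_set_conv_nth)
    show "c i \<in> Sset r i" using ck[OF k(1)] js k by auto
  next
    fix i assume "i \<notin> {1..n}" then show "c i = undefined" by (simp add: c_def) blast
  qed
  ultimately show "\<sigma> \<in> (\<lambda>(c, p). W c p) ` (PiE {1..n} (Sset r) \<times> permutations_of_set {1..n})"
    using p by (intro image_eqI[of _ _ "(c, p)"]) auto
next
  fix \<sigma> assume "\<sigma> \<in> (\<lambda>(c, p). W c p) ` (PiE {1..n} (Sset r) \<times> permutations_of_set {1..n})"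
  then obtain cp where cp: "cp \<in> PiE {1..n} (Sset r) \<times> permutations_of_set {1..n}"
    and sig0: "\<sigma> = (\<lambda>(c, p). W c p) cp" by (rule imageE)
  obtain c p where cpe: "cp = (c, p)" by (cases cp)
  have c: "c \<in> PiE {1..n} (Sset r)" and p: "p \<in> permutations_of_set {1..n}"
    using cp unfolding cpe by simp_all
  have sig: "\<sigma> = W c p" using sig0 unfolding cpe by simp
  have lp: "length p = n" using length_finite_permutations_of_set[OF p] by simp
  have sp: "set p = {1..n}" using p by (auto simp: permutations_of_set_def)
  have mz: "map Some (zip (map c p) p) = map (\<lambda>i. Some (c i, i)) p"
    by (rule nth_equalityI) simp_all
  moreover have "\<forall>k<n. map c p ! k \<in> Sset r (p ! k)"
  proof (intro allI impI)
    fix k assume "k < n"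
    then have "p ! k \<in> set p" using lp by simp
    then have "p ! k \<in> {1..n}" using sp by simp
    then show "map c p ! k \<in> Sset r (p ! k)" using PiE_mem[OF c] \<open>k < n\<close> lp by simp
  qed
  moreover have "\<sigma> = map Some (zip (map c p) p) @ [None]" unfolding sig W_def mz ..
  ultimately have "\<sigma> = map Some (zip (map c p) p) @ [None] \<and> p \<in> permutations_of_set {1..n} \<and>
      length (map c p) = n \<and> (\<forall>k<n. map c p ! k \<in> Sset r (p ! k))"
    using p lp by simp
  then show "\<sigma> \<in> signed_perms r n" unfolding signed_perms_def
    by (intro CollectI exI[of _ "map c p"] exI[of _ p])
qed

lemma W_inj: "inj_on (\<lambda>(c, p). W c p) (PiE {1..n} (Sset r) \<times> permutations_of_set {1..n})"
proof (rule inj_onI, clarify)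
  fix c p c' p'
  assume c: "c \<in> PiE {1..n} (Sset r)" and p: "p \<in> permutations_of_set {1..n}"
    and c': "c' \<in> PiE {1..n} (Sset r)" and p': "p' \<in> permutations_of_set {1..n}"
    and e: "W c p = W c' p'"
  then have e2: "map (\<lambda>i. Some (c i, i)) p = map (\<lambda>i. Some (c' i, i)) p'" by (simp add: W_def)
  then have "map (snd \<circ> the) (map (\<lambda>i. Some (c i, i)) p) = map (snd \<circ> the) (map (\<lambda>i. Some (c' i, i)) p')"
    by simp
  then have pp: "p = p'" by (simp add: comp_def)
  have sp: "set p = {1..n}" using p by (auto simp: permutations_of_set_def)
  have "\<forall>i\<in>set p. c i = c' i" using e2 unfolding pp by (simp add: map_eq_conv)
  then have "c = c'" using c c' sp by (intro PiE_ext) auto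
  then show "c = c' \<and> p = p'" using pp by simp
qed

lemma Sset_nz: "j \<in> Sset r i \<Longrightarrow> j \<noteq> 0"
  by (auto simp: Sset_def)

lemma Sset_sum: "(\<Sum>j\<in>Sset r i. (if 0 < j then q else 1)) = 1 + of_nat (r i - 1) * (q::'a::comm_ring_1)"
proof -
  have "Sset r i = insert (-1) {2..int (r i)}" by (auto simp: Sset_def)
  then have "(\<Sum>j\<in>Sset r i. (if 0 < j then q else 1)) = 1 + (\<Sum>j\<in>{2..int (r i)}. (if 0 < j then q else 1))"
    by simp
  also have "(\<Sum>j\<in>{2..int (r i)}. (if 0 < j then q else 1)) = (\<Sum>j\<in>{2..int (r i)}. q)"
    by (rule sum.cong) auto
  also have "\<dots> = of_nat (card {2..int (r i)}) * q" by simp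
  also have "card {2..int (r i)} = r i - 1" by simp
  finally show ?thesis .
qed

lemma inner_sum:
  fixes q :: "'a::comm_ring_1"
  assumes c: "c \<in> PiE {1..n} (Sset r)"
  shows "(\<Sum>p\<in>permutations_of_set {1..n}. q ^ maj (W c p))
       = qfact q n * (\<Prod>i\<in>{1..n}. if 0 < c i then q else 1)"
proof -
  have nz: "\<forall>i\<in>{1..n}. c i \<noteq> 0" using PiE_mem[OF c] Sset_nz by blast
  have "(\<Sum>p\<in>permutations_of_set {1..n}. q ^ maj (W c p))
      = (\<Sum>p\<in>permutations_of_set {1..n}. q ^ majG (map (\<lambda>i. (c i, i)) p @ [(0, 0)]))"
  proof (rule sum.cong[OF refl])
    fix p assume p: "p \<in> permutations_of_set {1..n}"
    have sp: "set p = {1..n}" using p by (auto simp: permutations_of_set_def)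
    have "\<forall>x\<in>set (W c p). okE x" using nz sp by (auto simp: W_def okE_def)
    then have "maj (W c p) = majG (map key (W c p))" by (rule maj_key)
    also have "map key (W c p) = map (\<lambda>i. (c i, i)) p @ [(0, 0)]" by (simp add: W_def key_def)
    finally show "q ^ maj (W c p) = q ^ majG (map (\<lambda>i. (c i, i)) p @ [(0, 0)])" by simp
  qed
  also have "\<dots> = q ^ card {i\<in>{1..n}. (c i, i) > (0::int, 0::nat)} * qfact q (card {1..n})"
    by (rule perm_maj) (use nz in \<open>auto simp: inj_on_def\<close>)
  also have "{i\<in>{1..n}. (c i, i) > (0::int, 0::nat)} = {i\<in>{1..n}. 0 < c i}"
  proof (rule set_eqI)
    fix i show "i \<in> {i\<in>{1..n}. (c i, i) > (0::int, 0::nat)} \<longleftrightarrow> i \<in> {i\<in>{1..n}. 0 < c i}"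
      using nz[rule_format, of i] by (auto simp: less_prod_def)
  qed
  also have "q ^ card {i\<in>{1..n}. 0 < c i} = (\<Prod>i\<in>{1..n}. if 0 < c i then q else 1)"
    by (simp add: prod.inter_filter[symmetric])
  finally show ?thesis by (simp add: mult.commute)
qed

theorem mainTheorem9:
  fixes r :: "nat \<Rightarrow> nat" and n :: nat and q :: "'a::comm_ring_1"
  assumes "\<forall>i\<in>{1..n}. r i > 0"
  shows "(\<Sum>\<sigma>\<in>signed_perms r n. q ^ maj \<sigma>)
         = qfact q n * (\<Prod>i=1..n. 1 + of_nat (r i - 1) * q)"
proof -
  have "(\<Sum>\<sigma>\<in>signed_perms r n. q ^ maj \<sigma>)
      = (\<Sum>cp\<in>PiE {1..n} (Sset r) \<times> permutations_of_set {1..n}. q ^ maj ((\<lambda>(c, p). W c p) cp))"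
    unfolding signed_eq by (rule sum.reindex[OF W_inj, unfolded comp_def])
  also have "\<dots> = (\<Sum>c\<in>PiE {1..n} (Sset r). \<Sum>p\<in>permutations_of_set {1..n}. q ^ maj (W c p))"
    by (simp add: sum.cartesian_product split_def)
  also have "\<dots> = (\<Sum>c\<in>PiE {1..n} (Sset r). qfact q n * (\<Prod>i\<in>{1..n}. if 0 < c i then q else 1))"
    by (rule sum.cong[OF refl]) (rule inner_sum)
  also have "\<dots> = qfact q n * (\<Prod>i\<in>{1..n}. \<Sum>j\<in>Sset r i. if 0 < j then q else 1)"
  proof -
    have "(\<Prod>i\<in>{1..n}. \<Sum>j\<in>Sset r i. if 0 < j then q else 1) = (\<Sum>c\<in>PiE {1..n} (Sset r). \<Prod>i\<in>{1..n}. if 0 < c i then q else 1)"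
      by (rule prod_sum_PiE) (auto simp: Sset_def)
    then show ?thesis by (simp add: sum_distrib_left)
  qed
  also have "\<dots> = qfact q n * (\<Prod>i=1..n. 1 + of_nat (r i - 1) * q)"
    by (simp add: Sset_sum)
  finally show ?thesis .
qed

end
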